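(* (a) Let $n=1$ and let $m,\hat m\in A_1$ be monomials with multi-degrees $(r,s)$ and $(\hat r,\hat s)$. (a1) If $[m,\hat m]=0$ then $s\hat r=r\hat s$. (a2) If $\hat r=\hat s\neq0$ and $[m,\hat m]=0$, then $r=s$. (b) Let $m,\hat m\in A_n$ be monomials with multi-degrees $(\alpha,\beta)$ and $(\hat\alpha,\hat\beta)$. (b1) If $[m,\hat m]=0$ then $\beta_j\hat\alpha_j=\alpha_j\hat\beta_j$ for all $j\in\{1,\dots,n\}$. (b2) If $\hat\alpha=\hat\beta$ and $[m,\hat m]=0$, then $\alpha_j=\beta_j$ for every index $j$ with $\hat\alpha_j\neq0$. (c) Let $m,\tilde m\in A_n$ be monomials with multi-degrees $(\alpha,\beta)$ and $(\tilde\alpha,\tilde\alpha)$. Then $[m,\tilde m]=0$ if and only if $\alpha_j=\beta_j$ for every index $j$ with $\tilde\alpha_j\neq0$.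
   Context: Fix $n\ge 1$. The Weyl algebra $A_n$ is the unital associative $\mathbb{C}$-algebra generated by $a_1,\dots,a_n,a_1^\dagger,\dots,a_n^\dagger$ subject to $[a_i,a_j^\dagger]=\delta_{ij}$ and $[a_i,a_j]=[a_i^\dagger,a_j^\dagger]=0$, where $[x,y]=xy-yx$. A monomial is a finite product (in any order) of the generators $a_j,a_j^\dagger$; its multi-degree $\mathrm{mdeg}(m)=(\alpha,\beta)\in\mathbb N_0^{2n}$ records the number $\alpha_j$ of factors $a_j^\dagger$ and the number $\beta_j$ of factors $a_j$. *)

theory Defs
  imports Complex_Main
begin

text \<open>Generators of the Weyl algebra: Ann j is a_j, Cre j is a_j^dagger (indices from 0).
A monomial is a word (finite list) in the generators.\<close>
datatype gen = Ann nat | Cre nat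

definition gen_index :: "gen \<Rightarrow> nat" where
  "gen_index g = (case g of Ann j \<Rightarrow> j | Cre j \<Rightarrow> j)"

definition is_monomial :: "nat \<Rightarrow> gen list \<Rightarrow> bool" where
  "is_monomial n m \<longleftrightarrow> (\<forall>g \<in> set m. gen_index g < n)"

definition mdeg_alpha :: "gen list \<Rightarrow> nat \<Rightarrow> nat" where
  "mdeg_alpha m j = length (filter (\<lambda>g. g = Cre j) m)"

definition mdeg_beta :: "gen list \<Rightarrow> nat \<Rightarrow> nat" where
  "mdeg_beta m j = length (filter (\<lambda>g. g = Ann j) m)"

text \<open>Realisation of A_n in its standard faithful (Fock/Bargmann) representation:
formal power series given by coefficient functions (exponent vector \<Rightarrow> coefficient);
a_j^dagger acts as multiplication by x_j and a_j as d/dx_j.  Then [a_i, a_j^dagger] = delta_ij,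
and this representation of the Weyl algebra is faithful, so equality in A_n is equality
of operators.\<close>
type_synonym series = "(nat \<Rightarrow> nat) \<Rightarrow> complex"

fun gen_op :: "gen \<Rightarrow> series \<Rightarrow> series" where
  "gen_op (Cre j) f = (\<lambda>e. if e j = 0 then 0 else f (e(j := e j - 1)))"
| "gen_op (Ann j) f = (\<lambda>e. of_nat (e j + 1) * f (e(j := e j + 1)))"

fun weyl_op :: "gen list \<Rightarrow> series \<Rightarrow> series" where
  "weyl_op [] f = f"
| "weyl_op (g # gs) f = gen_op g (weyl_op gs f)"

definition weyl_comm :: "gen list \<Rightarrow> gen list \<Rightarrow> series \<Rightarrow> series" where
  "weyl_comm m m' f = (\<lambda>e. weyl_op m (weyl_op m' f) e - weyl_op m' (weyl_op m f) e)"

definition comm_zero :: "gen list \<Rightarrow> gen list \<Rightarrow> bool" where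
  "comm_zero m m' \<longleftrightarrow> (\<forall>f e. weyl_comm m m' f e = 0)"

end

theory Submission
  imports Defs "HOL-Computational_Algebra.Polynomial"
begin

definition dl :: "gen list \<Rightarrow> nat \<Rightarrow> int" where
  "dl m i = int (mdeg_beta m i) - int (mdeg_alpha m i)"

lemma dl_simps[simp]:
  "dl [] i = 0"
  "dl (Ann j # gs) i = dl gs i + (if i = j then 1 else 0)"
  "dl (Cre j # gs) i = dl gs i - (if i = j then 1 else 0)"
  by (auto simp: dl_def mdeg_alpha_def mdeg_beta_def)

fun cf :: "gen list \<Rightarrow> (nat \<Rightarrow> int) \<Rightarrow> int" where
  "cf [] E = 1"
| "cf (Cre j # gs) E = cf gs (E(j := E j - 1))"
| "cf (Ann j # gs) E = (E j + 1) * cf gs (E(j := E j + 1))"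

lemma cf_zero: "E j < 0 \<Longrightarrow> E j + dl gs j \<ge> 0 \<Longrightarrow> cf gs E = 0"
proof (induction gs arbitrary: E)
  case Nil then show ?case by simp
next
  case (Cons g gs)
  show ?case
  proof (cases g)
    case (Ann i)
    show ?thesis
    proof (cases "i = j")
      case True
      show ?thesis
      proof (cases "E j = -1")
        case True then show ?thesis using Ann \<open>i = j\<close> by simp
      next
        case False
        have "cf gs (E(j := E j + 1)) = 0"
          by (rule Cons.IH) (use False Cons.prems Ann \<open>i = j\<close> in auto)
        then show ?thesis using Ann \<open>i = j\<close> by simp
      qed
    next
      case False
      have "cf gs (E(i := E i + 1)) = 0"
        by (rule Cons.IH) (use False Cons.prems Ann in auto)
      then show ?thesis using Ann by simp
    qed
  next
    case (Cre i)
    have "cf gs (E(i := E i - 1)) = 0"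
      using Cons.prems Cre by (cases "i = j") (auto intro!: Cons.IH)
    then show ?thesis using Cre by simp
  qed
qed

lemma weyl_closed:
  "weyl_op m f e = (if (\<forall>i. int (e i) + dl m i \<ge> 0)
     then of_int (cf m (\<lambda>i. int (e i))) * f (\<lambda>i. nat (int (e i) + dl m i)) else 0)"
proof (induction m arbitrary: e)
  case Nil then show ?case by simp
next
  case (Cons g gs)
  show ?case
  proof (cases g)
    case (Ann j)
    have c: "(\<forall>i. int ((e(j := e j + 1)) i) + dl gs i \<ge> 0) = (\<forall>i. int (e i) + dl (g#gs) i \<ge> 0)"
      using Ann by auto
    have s: "(\<lambda>i. nat (int ((e(j := e j + 1)) i) + dl gs i)) = (\<lambda>i. nat (int (e i) + dl (g#gs) i))"
      using Ann by (auto simp: fun_eq_iff)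
    have ce: "(\<lambda>i. int ((e(j := e j + 1)) i)) = (\<lambda>i. int (e i))(j := int (e j) + 1)"
      by (auto simp: fun_eq_iff)
    have "weyl_op (g#gs) f e = of_nat (e j + 1) * weyl_op gs f (e(j := e j + 1))"
      using Ann by simp
    also have "\<dots> = of_nat (e j + 1) * (if (\<forall>i. int (e i) + dl (g#gs) i \<ge> 0)
     then of_int (cf gs ((\<lambda>i. int (e i))(j := int (e j) + 1))) * f (\<lambda>i. nat (int (e i) + dl (g#gs) i)) else 0)"
      unfolding Cons.IH[of "e(j := e j + 1)"] c s ce ..
    also have "\<dots> = (if (\<forall>i. int (e i) + dl (g#gs) i \<ge> 0)
     then of_int (cf (g#gs) (\<lambda>i. int (e i))) * f (\<lambda>i. nat (int (e i) + dl (g#gs) i)) else 0)"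
      using Ann by simp
    finally show ?thesis .
  next
    case (Cre j)
    show ?thesis
    proof (cases "e j = 0")
      case True
      have "cf gs ((\<lambda>i. int (e i))(j := int (e j) - 1)) = 0" if "\<forall>i. int (e i) + dl (g#gs) i \<ge> 0"
        using that[rule_format, of j] True Cre by (intro cf_zero[of _ j]) auto
      then show ?thesis using True Cre by auto
    next
      case False
      have c: "(\<forall>i. int ((e(j := e j - 1)) i) + dl gs i \<ge> 0) = (\<forall>i. int (e i) + dl (g#gs) i \<ge> 0)"
        using Cre False by auto
      have s: "(\<lambda>i. nat (int ((e(j := e j - 1)) i) + dl gs i)) = (\<lambda>i. nat (int (e i) + dl (g#gs) i))"
        using Cre False by (auto simp: fun_eq_iff)
      have ce: "(\<lambda>i. int ((e(j := e j - 1)) i)) = (\<lambda>i. int (e i))(j := int (e j) - 1)"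
        using False by (auto simp: fun_eq_iff)
      have "weyl_op (g#gs) f e = weyl_op gs f (e(j := e j - 1))"
        using Cre False by simp
      also have "\<dots> = (if (\<forall>i. int (e i) + dl (g#gs) i \<ge> 0)
     then of_int (cf gs ((\<lambda>i. int (e i))(j := int (e j) - 1))) * f (\<lambda>i. nat (int (e i) + dl (g#gs) i)) else 0)"
        unfolding Cons.IH[of "e(j := e j - 1)"] c s ce ..
      also have "\<dots> = (if (\<forall>i. int (e i) + dl (g#gs) i \<ge> 0)
     then of_int (cf (g#gs) (\<lambda>i. int (e i))) * f (\<lambda>i. nat (int (e i) + dl (g#gs) i)) else 0)"
        using Cre by simp
      finally show ?thesis .
    qed
  qed
qed

fun rootsj :: "gen list \<Rightarrow> nat \<Rightarrow> int \<Rightarrow> int list" where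
  "rootsj [] j ofs = []"
| "rootsj (Ann i # gs) j ofs = (if i = j then (ofs + 1) # rootsj gs j (ofs + 1) else rootsj gs j ofs)"
| "rootsj (Cre i # gs) j ofs = (if i = j then rootsj gs j (ofs - 1) else rootsj gs j ofs)"

fun cfo :: "gen list \<Rightarrow> nat \<Rightarrow> (nat \<Rightarrow> int) \<Rightarrow> int" where
  "cfo [] j E = 1"
| "cfo (Ann i # gs) j E = (if i = j then cfo gs j (E(i := E i + 1)) else (E i + 1) * cfo gs j (E(i := E i + 1)))"
| "cfo (Cre i # gs) j E = cfo gs j (E(i := E i - 1))"

lemma cf_split: "E j = x + ofs \<Longrightarrow> cf m E = prod_list (map (\<lambda>k. x + k) (rootsj m j ofs)) * cfo m j E"
proof (induction m arbitrary: E ofs)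
  case Nil then show ?case by simp
next
  case (Cons g gs)
  show ?case
  proof (cases g)
    case (Ann i)
    show ?thesis
    proof (cases "i = j")
      case True
      have "cf gs (E(j := E j + 1)) = prod_list (map (\<lambda>k. x + k) (rootsj gs j (ofs+1))) * cfo gs j (E(j := E j + 1))"
        by (rule Cons.IH) (use Cons.prems in simp)
      then show ?thesis using Ann True Cons.prems by (simp add: algebra_simps)
    next
      case False
      have "cf gs (E(i := E i + 1)) = prod_list (map (\<lambda>k. x + k) (rootsj gs j ofs)) * cfo gs j (E(i := E i + 1))"
        by (rule Cons.IH) (use Cons.prems False in simp)
      then show ?thesis using Ann False Cons.prems by (simp add: algebra_simps)
    qed
  next
    case (Cre i)
    show ?thesis
    proof (cases "i = j")
      case True
      have "cf gs (E(j := E j - 1)) = prod_list (map (\<lambda>k. x + k) (rootsj gs j (ofs-1))) * cfo gs j (E(j := E j - 1))"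
        by (rule Cons.IH) (use Cons.prems in simp)
      then show ?thesis using Cre True Cons.prems by (simp add: algebra_simps)
    next
      case False
      have "cf gs (E(i := E i - 1)) = prod_list (map (\<lambda>k. x + k) (rootsj gs j ofs)) * cfo gs j (E(i := E i - 1))"
        by (rule Cons.IH) (use Cons.prems False in simp)
      then show ?thesis using Cre False Cons.prems by (simp add: algebra_simps)
    qed
  qed
qed

lemma cfo_indep: "(\<forall>i. i \<noteq> j \<longrightarrow> E i = E' i) \<Longrightarrow> cfo m j E = cfo m j E'"
proof (induction m arbitrary: E E')
  case Nil then show ?case by simp
next
  case (Cons g gs)
  show ?case
  proof (cases g)
    case (Ann i)
    have "cfo gs j (E(i := E i + 1)) = cfo gs j (E'(i := E' i + 1))"
      by (rule Cons.IH) (use Cons.prems in auto)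
    then show ?thesis using Ann Cons.prems by auto
  next
    case (Cre i)
    have "cfo gs j (E(i := E i - 1)) = cfo gs j (E'(i := E' i - 1))"
      by (rule Cons.IH) (use Cons.prems in auto)
    then show ?thesis using Cre by auto
  qed
qed

lemma cf_indep: "(\<forall>i\<in>gen_index ` set m. E i = E' i) \<Longrightarrow> cf m E = cf m E'"
proof (induction m arbitrary: E E')
  case Nil then show ?case by simp
next
  case (Cons g gs)
  show ?case
  proof (cases g)
    case (Ann i)
    have "cf gs (E(i := E i + 1)) = cf gs (E'(i := E' i + 1))"
      by (rule Cons.IH) (use Cons.prems Ann in \<open>auto simp: gen_index_def\<close>)
    moreover have "E i = E' i" using Cons.prems Ann by (auto simp: gen_index_def)
    ultimately show ?thesis using Ann by simp
  next
    case (Cre i)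
    have "cf gs (E(i := E i - 1)) = cf gs (E'(i := E' i - 1))"
      by (rule Cons.IH) (use Cons.prems Cre in \<open>auto simp: gen_index_def\<close>)
    then show ?thesis using Cre by simp
  qed
qed

lemma rootsj_shift: "rootsj m j (ofs + c) = map (\<lambda>k. k + c) (rootsj m j ofs)"
  apply (induction m arbitrary: ofs)
   apply simp
  subgoal premises IH for g gs ofs using IH[of "ofs+1"] IH[of "ofs - 1"] IH[of ofs] by (cases g) (auto simp: algebra_simps)
  done

lemma rootsj_length: "length (rootsj m j ofs) = mdeg_beta m j"
  apply (induction m arbitrary: ofs)
   apply (simp add: mdeg_beta_def)
  subgoal for g gs ofs by (cases g) (auto simp: mdeg_beta_def)
  done

lemma cf_pos: "(\<forall>i. E i \<ge> int (length m)) \<Longrightarrow> cf m E > 0"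
proof (induction m arbitrary: E)
  case Nil then show ?case by simp
next
  case (Cons g gs)
  show ?case
  proof (cases g)
    case (Ann i)
    have "cf gs (E(i := E i + 1)) > 0"
    proof (rule Cons.IH, rule allI)
      fix i' show "int (length gs) \<le> (E(i := E i + 1)) i'" using Cons.prems[rule_format, of i'] by auto
    qed
    moreover have "E i + 1 > 0" using Cons.prems[rule_format, of i] by simp
    ultimately show ?thesis using Ann by simp
  next
    case (Cre i)
    have "cf gs (E(i := E i - 1)) > 0"
    proof (rule Cons.IH, rule allI)
      fix i' show "int (length gs) \<le> (E(i := E i - 1)) i'" using Cons.prems[rule_format, of i'] by auto
    qed
    then show ?thesis using Cre by simp
  qed
qed

lemma dl_bound: "\<bar>dl m i\<bar> \<le> int (length m)"
proof -
  have "mdeg_alpha m i \<le> length m" "mdeg_beta m i \<le> length m"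
    unfolding mdeg_alpha_def mdeg_beta_def by (rule length_filter_le)+
  then show ?thesis unfolding dl_def by linarith
qed

definition PL :: "int list \<Rightarrow> int poly" where
  "PL K = prod_list (map (\<lambda>k. [:k, 1:]) K)"

lemma poly_PL: "poly (PL K) x = prod_list (map (\<lambda>k. x + k) K)"
  by (induction K) (auto simp: PL_def algebra_simps)

lemma coeff_PL: "coeff (PL K) (length K) = 1 \<and> (\<forall>i>length K. coeff (PL K) i = 0)
   \<and> (K \<noteq> [] \<longrightarrow> coeff (PL K) (length K - 1) = sum_list K)"
proof (induction K)
  case Nil then show ?case by (auto simp: PL_def coeff_eq_0)
next
  case (Cons k K)
  note IH = Cons.IH
  have eq: "PL (k # K) = smult k (PL K) + pCons 0 (PL K)"
    by (simp add: PL_def)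
  have c: "coeff (PL (k # K)) i = k * coeff (PL K) i + (case i of 0 \<Rightarrow> 0 | Suc i' \<Rightarrow> coeff (PL K) i')" for i
    unfolding eq by (simp add: coeff_pCons split: nat.split)
  show ?case
  proof (intro conjI allI impI)
    show "coeff (PL (k # K)) (length (k # K)) = 1" using Cons.IH by (simp add: c)
    show "coeff (PL (k # K)) i = 0" if "i > length (k # K)" for i
      using Cons.IH that by (auto simp: c split: nat.split)
    show "coeff (PL (k # K)) (length (k # K) - 1) = sum_list (k # K)"
    proof (cases K)
      case Nil then show ?thesis by (simp add: c PL_def)
    next
      case (Cons k' K')
      then have "length (k # K) - 1 = Suc (length K - 1)" by simp
      moreover have "coeff (PL (k#K)) (Suc (length K - 1)) = k * coeff (PL K) (Suc (length K - 1)) + coeff (PL K) (length K - 1)"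
        by (simp add: c)
      moreover have "Suc (length K - 1) = length K" using \<open>K = k' # K'\<close> by simp
      ultimately show ?thesis using IH \<open>K = k' # K'\<close> by simp
    qed
  qed
qed

lemma poly_cmp:
  fixes A B L :: int and K K' :: "int list"
  assumes h: "\<forall>x\<ge>L. A * prod_list (map (\<lambda>k. x + k) K) = B * prod_list (map (\<lambda>k. x + k) K')"
    and len: "length K = length K'" and A: "A \<noteq> 0"
  shows "sum_list K = sum_list K'"
proof -
  define q where "q = smult A (PL K) - smult B (PL K')"
  have "{L..} \<subseteq> {x. poly q x = 0}" using h by (auto simp: q_def poly_PL)
  moreover have "infinite {L..}" by (rule infinite_Ici)
  ultimately have "infinite {x. poly q x = 0}" using finite_subset by blast
  then have "q = 0" using poly_roots_finite by blast
  then have eq: "smult A (PL K) = smult B (PL K')" unfolding q_def by simp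
  have "A = B" using arg_cong[OF eq, of "\<lambda>p. coeff p (length K)"] coeff_PL[of K] coeff_PL[of K'] len by simp
  show ?thesis
  proof (cases "K = []")
    case True then show ?thesis using len by simp
  next
    case False
    then have "K' \<noteq> []" using len by auto
    then have "A * sum_list K = B * sum_list K'"
      using arg_cong[OF eq, of "\<lambda>p. coeff p (length K - 1)"] coeff_PL[of K] coeff_PL[of K'] len False by simp
    then show ?thesis using \<open>A = B\<close> A by simp
  qed
qed

lemma comm_eq: "comm_zero m mh \<Longrightarrow> weyl_op m (weyl_op mh f) e = weyl_op mh (weyl_op m f) e"
  unfolding comm_zero_def weyl_comm_def by (metis eq_iff_diff_eq_0)

lemma sum_list_shift: "sum_list (map (\<lambda>k. k + c) K) = sum_list K + int (length K) * c"
  by (induction K) (auto simp: algebra_simps)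

lemma b1:
  assumes cz: "comm_zero m mh"
  shows "mdeg_beta m j * mdeg_alpha mh j = mdeg_alpha m j * mdeg_beta mh j"
proof -
  define L where "L = int (length m + length mh)"
  define EE where "EE x = (\<lambda>i. if i = j then x else L)" for x
  have L0: "L \<ge> 0" unfolding L_def by simp
  have key: "cf m (EE x) * cf mh (\<lambda>i. EE x i + dl m i) = cf mh (EE x) * cf m (\<lambda>i. EE x i + dl mh i)"
    if x: "x \<ge> L" for x
  proof -
    define e where "e = (\<lambda>i. nat (EE x i))"
    have ge: "EE x i \<ge> L" for i using x by (simp add: EE_def)
    have ge0: "EE x i \<ge> 0" for i using ge[of i] L0 by linarith
    have Ee: "(\<lambda>i. int (e i)) = EE x" using ge0 by (auto simp: e_def fun_eq_iff)
    have bm: "\<bar>dl m i\<bar> \<le> int (length m)" and bmh: "\<bar>dl mh i\<bar> \<le> int (length mh)" for i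
      by (rule dl_bound)+
    have H: "weyl_op m (weyl_op mh (\<lambda>_. 1)) e = weyl_op mh (weyl_op m (\<lambda>_. 1)) e"
      by (rule comm_eq[OF cz])
    have s1: "weyl_op m (weyl_op mh (\<lambda>_. 1)) e = of_int (cf m (EE x) * cf mh (\<lambda>i. EE x i + dl m i))"
    proof -
      have c1: "\<forall>i. int (e i) + dl m i \<ge> 0"
      proof
        fix i show "int (e i) + dl m i \<ge> 0" using Ee ge[of i] bm[of i] unfolding L_def
          by (simp add: fun_eq_iff)
      qed
      have e1: "(\<lambda>i. int (nat (int (e i) + dl m i))) = (\<lambda>i. EE x i + dl m i)"
        using c1 Ee by (auto simp: fun_eq_iff)
      have c2: "\<forall>i. int (nat (int (e i) + dl m i)) + dl mh i \<ge> 0"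
      proof
        fix i
        have "int (nat (int (e i) + dl m i)) + dl mh i = EE x i + dl m i + dl mh i" using e1 by metis
        also have "\<dots> \<ge> 0" using ge[of i] bm[of i] bmh[of i] unfolding L_def by linarith
        finally show "int (nat (int (e i) + dl m i)) + dl mh i \<ge> 0" .
      qed
      show ?thesis
        apply (subst weyl_closed)
        apply (subst weyl_closed)
        using c1 c2 e1 Ee by simp
    qed
    have s2: "weyl_op mh (weyl_op m (\<lambda>_. 1)) e = of_int (cf mh (EE x) * cf m (\<lambda>i. EE x i + dl mh i))"
    proof -
      have c1: "\<forall>i. int (e i) + dl mh i \<ge> 0"
      proof
        fix i show "int (e i) + dl mh i \<ge> 0" using Ee ge[of i] bmh[of i] unfolding L_def
          by (simp add: fun_eq_iff)
      qed
      have e1: "(\<lambda>i. int (nat (int (e i) + dl mh i))) = (\<lambda>i. EE x i + dl mh i)"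
        using c1 Ee by (auto simp: fun_eq_iff)
      have c2: "\<forall>i. int (nat (int (e i) + dl mh i)) + dl m i \<ge> 0"
      proof
        fix i
        have "int (nat (int (e i) + dl mh i)) + dl m i = EE x i + dl mh i + dl m i" using e1 by metis
        also have "\<dots> \<ge> 0" using ge[of i] bm[of i] bmh[of i] unfolding L_def by linarith
        finally show "int (nat (int (e i) + dl mh i)) + dl m i \<ge> 0" .
      qed
      show ?thesis
        apply (subst weyl_closed)
        apply (subst weyl_closed)
        using c1 c2 e1 Ee by simp
    qed
    show ?thesis using H s1 s2 of_int_eq_iff by metis
  qed
  define R where "R = rootsj m j 0"
  define Rh where "Rh = rootsj mh j 0"
  define d where "d = dl m j"
  define dh where "dh = dl mh j"
  define A where "A = cfo m j (EE L) * cfo mh j (\<lambda>i. EE L i + dl m i)"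
  define B where "B = cfo mh j (EE L) * cfo m j (\<lambda>i. EE L i + dl mh i)"
  have split: "cf m (EE x) * cf mh (\<lambda>i. EE x i + dl m i)
      = A * prod_list (map (\<lambda>k. x + k) (R @ map (\<lambda>k. k + d) Rh))"
    and split2: "cf mh (EE x) * cf m (\<lambda>i. EE x i + dl mh i)
      = B * prod_list (map (\<lambda>k. x + k) (Rh @ map (\<lambda>k. k + dh) R))" for x
  proof -
    have i1: "cfo m j (EE x) = cfo m j (EE L)" "cfo mh j (EE x) = cfo mh j (EE L)"
      "cfo mh j (\<lambda>i. EE x i + dl m i) = cfo mh j (\<lambda>i. EE L i + dl m i)"
      "cfo m j (\<lambda>i. EE x i + dl mh i) = cfo m j (\<lambda>i. EE L i + dl mh i)"
      by (rule cfo_indep; simp add: EE_def)+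
    have a1: "cf m (EE x) = prod_list (map (\<lambda>k. x + k) R) * cfo m j (EE x)"
      unfolding R_def by (rule cf_split) (simp add: EE_def)
    have a2: "cf mh (EE x) = prod_list (map (\<lambda>k. x + k) Rh) * cfo mh j (EE x)"
      unfolding Rh_def by (rule cf_split) (simp add: EE_def)
    have a3: "cf mh (\<lambda>i. EE x i + dl m i) = prod_list (map (\<lambda>k. x + k) (map (\<lambda>k. k + d) Rh)) * cfo mh j (\<lambda>i. EE x i + dl m i)"
      using cf_split[of "\<lambda>i. EE x i + dl m i" j x d mh] rootsj_shift[of mh j 0 d]
      unfolding Rh_def d_def by (simp add: EE_def)
    have a4: "cf m (\<lambda>i. EE x i + dl mh i) = prod_list (map (\<lambda>k. x + k) (map (\<lambda>k. k + dh) R)) * cfo m j (\<lambda>i. EE x i + dl mh i)"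
      using cf_split[of "\<lambda>i. EE x i + dl mh i" j x dh m] rootsj_shift[of m j 0 dh]
      unfolding R_def dh_def by (simp add: EE_def)
    show "cf m (EE x) * cf mh (\<lambda>i. EE x i + dl m i)
      = A * prod_list (map (\<lambda>k. x + k) (R @ map (\<lambda>k. k + d) Rh))"
      unfolding a1 a3 A_def i1 map_append prod_list.append by (simp only: mult_ac)
    show "cf mh (EE x) * cf m (\<lambda>i. EE x i + dl mh i)
      = B * prod_list (map (\<lambda>k. x + k) (Rh @ map (\<lambda>k. k + dh) R))"
      unfolding a2 a4 B_def i1 map_append prod_list.append by (simp only: mult_ac)
  qed
  have A0: "A \<noteq> 0"
  proof -
    have p1: "cf m (EE L) > 0" by (rule cf_pos) (simp add: EE_def L_def)
    have p2: "cf mh (\<lambda>i. EE L i + dl m i) > 0"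
    proof (rule cf_pos, rule allI)
      fix i
      show "int (length mh) \<le> EE L i + dl m i" using dl_bound[of m i] dl_bound[of m j] by (simp add: EE_def L_def) linarith
    qed
    have "cf m (EE L) * cf mh (\<lambda>i. EE L i + dl m i) \<noteq> 0" using p1 p2 by simp
    then show ?thesis using split[of L] by auto
  qed
  have "sum_list (R @ map (\<lambda>k. k + d) Rh) = sum_list (Rh @ map (\<lambda>k. k + dh) R)"
    by (rule poly_cmp[of L A _ B]) (use key split split2 A0 in auto)
  then have "int (length Rh) * d = int (length R) * dh" by (simp add: sum_list_shift)
  then have "int (mdeg_beta mh j) * (int (mdeg_beta m j) - int (mdeg_alpha m j))
     = int (mdeg_beta m j) * (int (mdeg_beta mh j) - int (mdeg_alpha mh j))"
    by (simp add: R_def Rh_def d_def dh_def rootsj_length dl_def)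
  then have "int (mdeg_beta m j * mdeg_alpha mh j) = int (mdeg_alpha m j * mdeg_beta mh j)"
    by (simp add: algebra_simps)
  then show ?thesis by (simp only: of_nat_eq_iff)
qed

lemma wt: "\<forall>j. dl mt j = 0 \<Longrightarrow> weyl_op mt g e = of_int (cf mt (\<lambda>i. int (e i))) * g e"
  by (subst weyl_closed) simp

lemma c_back:
  assumes z: "\<forall>j. dl mt j = 0" and z2: "\<forall>j\<in>gen_index ` set mt. dl m j = 0"
  shows "comm_zero m mt"
  unfolding comm_zero_def
proof (intro allI)
  fix f :: series and e :: "nat \<Rightarrow> nat"
  define E where "E = (\<lambda>i. int (e i))"
  define e1 where "e1 = (\<lambda>i. nat (int (e i) + dl m i))"
  have "weyl_op m (weyl_op mt f) e = weyl_op mt (weyl_op m f) e"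
  proof (cases "\<forall>i. int (e i) + dl m i \<ge> 0")
    case True
    have "(\<lambda>i. int (e1 i)) = (\<lambda>i. E i + dl m i)" using True by (auto simp: e1_def E_def fun_eq_iff)
    then have cfe: "cf mt (\<lambda>i. int (e1 i)) = cf mt E"
      by (simp, intro cf_indep) (use z2 in auto)
    have "weyl_op m (weyl_op mt f) e = of_int (cf m E) * weyl_op mt f e1"
      by (subst weyl_closed) (use True in \<open>simp add: E_def e1_def\<close>)
    also have "\<dots> = of_int (cf m E) * (of_int (cf mt E) * f e1)" using wt[OF z] cfe by simp
    also have "\<dots> = of_int (cf mt E) * weyl_op m f e"
      by (subst weyl_closed[of m f e]) (use True in \<open>simp add: E_def e1_def\<close>)
    also have "\<dots> = weyl_op mt (weyl_op m f) e" using wt[OF z] by (simp add: E_def)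
    finally show ?thesis .
  next
    case False
    have "weyl_op m g e = 0" for g by (subst weyl_closed) (use False in auto)
    then show ?thesis using wt[OF z] by simp
  qed
  then show "weyl_comm m mt f e = 0" unfolding weyl_comm_def by simp
qed

lemma idx_nz: "j \<in> gen_index ` set mt \<Longrightarrow> mdeg_alpha mt j \<noteq> 0 \<or> mdeg_beta mt j \<noteq> 0"
proof -
  assume "j \<in> gen_index ` set mt"
  then obtain g where g: "g \<in> set mt" "gen_index g = j" by auto
  show ?thesis
  proof (cases g)
    case (Ann i)
    then have "Ann j \<in> set mt" using g by (simp add: gen_index_def)
    then have "filter (\<lambda>g. g = Ann j) mt \<noteq> []" by (auto simp: filter_empty_conv)
    then show ?thesis by (simp add: mdeg_beta_def)
  next
    case (Cre i)
    then have "Cre j \<in> set mt" using g by (simp add: gen_index_def)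
    then have "filter (\<lambda>g. g = Cre j) mt \<noteq> []" by (auto simp: filter_empty_conv)
    then show ?thesis by (simp add: mdeg_alpha_def)
  qed
qed

lemma outside: "is_monomial n mt \<Longrightarrow> j \<ge> n \<Longrightarrow> mdeg_alpha mt j = 0 \<and> mdeg_beta mt j = 0"
  unfolding is_monomial_def mdeg_alpha_def mdeg_beta_def
  by (force simp: filter_empty_conv gen_index_def)

lemma idx_lt: "is_monomial n mt \<Longrightarrow> j \<in> gen_index ` set mt \<Longrightarrow> j < n"
  unfolding is_monomial_def by auto

theorem corollary1:
  shows
   "(\<forall>m mh. is_monomial 1 m \<and> is_monomial 1 mh \<longrightarrow>
       (comm_zero m mh \<longrightarrow>
          mdeg_beta m 0 * mdeg_alpha mh 0 = mdeg_alpha m 0 * mdeg_beta mh 0)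
     \<and> (mdeg_alpha mh 0 = mdeg_beta mh 0 \<and> mdeg_beta mh 0 \<noteq> 0 \<and> comm_zero m mh \<longrightarrow>
          mdeg_alpha m 0 = mdeg_beta m 0))
  \<and> (\<forall>n m mh. n \<ge> 1 \<and> is_monomial n m \<and> is_monomial n mh \<longrightarrow>
       (comm_zero m mh \<longrightarrow>
          (\<forall>j<n. mdeg_beta m j * mdeg_alpha mh j = mdeg_alpha m j * mdeg_beta mh j))
     \<and> ((\<forall>j<n. mdeg_alpha mh j = mdeg_beta mh j) \<and> comm_zero m mh \<longrightarrow>
          (\<forall>j<n. mdeg_alpha mh j \<noteq> 0 \<longrightarrow> mdeg_alpha m j = mdeg_beta m j)))
  \<and> (\<forall>n m mt. n \<ge> 1 \<and> is_monomial n m \<and> is_monomial n mt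
       \<and> (\<forall>j<n. mdeg_alpha mt j = mdeg_beta mt j) \<longrightarrow>
       (comm_zero m mt \<longleftrightarrow>
          (\<forall>j<n. mdeg_alpha mt j \<noteq> 0 \<longrightarrow> mdeg_alpha m j = mdeg_beta m j)))"
proof (intro conjI allI impI iffI)
  fix m mh :: "gen list"
  show "mdeg_beta m 0 * mdeg_alpha mh 0 = mdeg_alpha m 0 * mdeg_beta mh 0" if "comm_zero m mh"
    by (rule b1[OF that])
  show "mdeg_alpha m 0 = mdeg_beta m 0"
    if "mdeg_alpha mh 0 = mdeg_beta mh 0 \<and> mdeg_beta mh 0 \<noteq> 0 \<and> comm_zero m mh"
    using b1[of m mh 0] that by simp
next
  fix n j :: nat and m mh :: "gen list"
  assume "comm_zero m mh" "j < n"
  then show "mdeg_beta m j * mdeg_alpha mh j = mdeg_alpha m j * mdeg_beta mh j" by (intro b1)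
next
  fix n j :: nat and m mh :: "gen list"
  assume "(\<forall>j<n. mdeg_alpha mh j = mdeg_beta mh j) \<and> comm_zero m mh" "j < n" "mdeg_alpha mh j \<noteq> 0"
  then show "mdeg_alpha m j = mdeg_beta m j" using b1[of m mh j] by simp
next
  fix n j :: nat and m mt :: "gen list"
  assume "comm_zero m mt" "1 \<le> n \<and> is_monomial n m \<and> is_monomial n mt \<and> (\<forall>j<n. mdeg_alpha mt j = mdeg_beta mt j)"
    "j < n" "mdeg_alpha mt j \<noteq> 0"
  then show "mdeg_alpha m j = mdeg_beta m j" using b1[of m mt j] by simp
next
  fix n :: nat and m mt :: "gen list"
  assume h: "1 \<le> n \<and> is_monomial n m \<and> is_monomial n mt \<and> (\<forall>j<n. mdeg_alpha mt j = mdeg_beta mt j)"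
    and h2: "\<forall>j<n. mdeg_alpha mt j \<noteq> 0 \<longrightarrow> mdeg_alpha m j = mdeg_beta m j"
  show "comm_zero m mt"
  proof (rule c_back)
    show "\<forall>j. dl mt j = 0"
    proof
      fix j show "dl mt j = 0"
      proof (cases "j < n")
        case True then show ?thesis using h by (simp add: dl_def)
      next
        case False then show ?thesis using h outside[of n mt j] by (simp add: dl_def)
      qed
    qed
    show "\<forall>j\<in>gen_index ` set mt. dl m j = 0"
    proof
      fix j assume j: "j \<in> gen_index ` set mt"
      have jn: "j < n" using idx_lt[of n mt j] h j by simp
      have "mdeg_alpha mt j \<noteq> 0" using idx_nz[OF j] h jn by auto
      then show "dl m j = 0" using h2 jn by (simp add: dl_def)
    qed
  qed
qed

end
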